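(* Let $r>1$ and integers $N\ge1$, $K>2$, and let $L(r,K,N)$ and $U(r,K,N)$ denote respectively $\frac{\gamma_1^*(r,K,N)}{\frac{r^N-(r-1)^N}{r^{N-1}}+\gamma_1^*(r,K,N)}$ and $\frac{\gamma_2^*(r,K,N)}{\frac{r^N-(r-1)^N}{r^{N-1}}+\gamma_2^*(r,K,N)}$, where $\gamma_1^*(r,K,N)=N\sum_{i=N}^\infty\frac1i(1-\frac1r)^i(1-\frac1{K-1})^i$ and $\gamma_2^*(r,K,N)=N\sum_{i=N}^\infty\frac1i(1-\frac1r)^i$. Then: (i) for fixed $r,N$, $U(r,K,N)-L(r,K,N)\to0$ as $K\to\infty$; (ii) for fixed $r,K$, $\lim_{N\to\infty}\eta(r,K,N)=0$; (iii) $\lim_{r\to\infty}\left(\lim_{K\to\infty}\eta(r,K,N)\right)=1$; (iv) for fixed $r,K$, $\eta(r,K,N)=O\big((1-1/r)^N\big)$ as $N\to\infty$.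
   Context: Single item auction with $N$ buyers whose values are i.i.d., each taking values $0<x^1<\dots<x^K$ with probabilities $p^i>0$, $\sum_ip^i=1$. Let $z^i=(\sum_{j=1}^ip^j)^N-(\sum_{j=1}^{i-1}p^j)^N$ and reserve index $t(x,p)=\max\{i: i\in\arg\max_{1\le k\le K}x^k\sum_{j=k}^Kp^j\}$. The efficiency loss ratio of the welfare-maximizing revenue-optimal auction is $\mathrm{ELR}_N(x,p)=\sum_{i=1}^{t(x,p)-1}z^ix^i/\sum_{i=1}^Kz^ix^i$. $\eta(r,K,N)$ is the supremum of $\mathrm{ELR}_N(x,p)$ over all such $p$ and all $x$ with $0<x^1<\dots<x^K\le rx^1$. *)

theory Defs
  imports "HOL-Analysis.Analysis" "HOL-Library.Landau_Symbols"
begin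

text \<open>Values x 1 < ... < x K and probabilities p 1, ..., p K are functions on nat,
  only their restriction to {1..K} is relevant.\<close>

definition zz :: "nat \<Rightarrow> (nat \<Rightarrow> real) \<Rightarrow> nat \<Rightarrow> real" where
  "zz N p i = (\<Sum>j=1..i. p j) ^ N - (\<Sum>j=1..i-1. p j) ^ N"

definition reserve_idx :: "nat \<Rightarrow> (nat \<Rightarrow> real) \<Rightarrow> (nat \<Rightarrow> real) \<Rightarrow> nat" where
  "reserve_idx K x p = Max {i \<in> {1..K}. \<forall>k\<in>{1..K}.
      x k * (\<Sum>j=k..K. p j) \<le> x i * (\<Sum>j=i..K. p j)}"

definition ELR :: "nat \<Rightarrow> nat \<Rightarrow> (nat \<Rightarrow> real) \<Rightarrow> (nat \<Rightarrow> real) \<Rightarrow> real" where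
  "ELR N K x p = (\<Sum>i=1..reserve_idx K x p - 1. zz N p i * x i) / (\<Sum>i=1..K. zz N p i * x i)"

definition admissible :: "real \<Rightarrow> nat \<Rightarrow> (nat \<Rightarrow> real) \<Rightarrow> (nat \<Rightarrow> real) \<Rightarrow> bool" where
  "admissible r K x p \<longleftrightarrow>
     (\<forall>i\<in>{1..K}. p i > 0) \<and> (\<Sum>i=1..K. p i) = 1 \<and>
     0 < x 1 \<and> (\<forall>i\<in>{1..K}. \<forall>j\<in>{1..K}. i < j \<longrightarrow> x i < x j) \<and> x K \<le> r * x 1"

definition eta :: "real \<Rightarrow> nat \<Rightarrow> nat \<Rightarrow> real" where
  "eta r K N = Sup {ELR N K x p | x p. admissible r K x p}"

definition gamma1 :: "real \<Rightarrow> nat \<Rightarrow> nat \<Rightarrow> real" where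
  "gamma1 r K N = real N * (\<Sum>i. if i \<ge> N then (1 / real i) * (1 - 1/r) ^ i * (1 - 1 / (real K - 1)) ^ i else 0)"

definition gamma2 :: "real \<Rightarrow> nat \<Rightarrow> nat \<Rightarrow> real" where
  "gamma2 r K N = real N * (\<Sum>i. if i \<ge> N then (1 / real i) * (1 - 1/r) ^ i else 0)"

definition LB :: "real \<Rightarrow> nat \<Rightarrow> nat \<Rightarrow> real" where
  "LB r K N = gamma1 r K N / ((r ^ N - (r - 1) ^ N) / r ^ (N - 1) + gamma1 r K N)"

definition UB :: "real \<Rightarrow> nat \<Rightarrow> nat \<Rightarrow> real" where
  "UB r K N = gamma2 r K N / ((r ^ N - (r - 1) ^ N) / r ^ (N - 1) + gamma2 r K N)"

end

theory Submission
  imports Defs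
begin
lemma tail_eq:
  fixes p :: "nat \<Rightarrow> real"
  assumes "1 \<le> k" "k \<le> Suc K"
  shows "(\<Sum>j=k..K. p j) = (\<Sum>j=1..K. p j) - (\<Sum>j=1..k-1. p j)"
proof -
  have e: "{1..K} = {1..k-1} \<union> {k..K}" using assms by auto
  have "(\<Sum>j=1..K. p j) = (\<Sum>j=1..k-1. p j) + (\<Sum>j=k..K. p j)"
    unfolding e by (rule sum.union_disjoint) auto
  then show ?thesis by simp
qed

lemma sum_zz:
  assumes "N \<ge> 1"
  shows "(\<Sum>i=1..m. zz N p i) = (\<Sum>j=1..m. p j) ^ N"
proof (induction m)
  case 0
  then show ?case using assms by simp
next
  case (Suc m)
  then show ?case by (simp add: zz_def)
qed

lemma prefix_mono:
  fixes p :: "nat \<Rightarrow> real"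
  assumes "\<forall>i\<in>{1..K}. p i > 0" "i \<le> j" "j \<le> K"
  shows "(\<Sum>l=1..i. p l) \<le> (\<Sum>l=1..j. p l)"
proof (rule sum_mono2)
  fix b assume "b \<in> {1..j} - {1..i}"
  then show "0 \<le> p b" using assms by (auto intro!: less_imp_le)
qed (use assms in auto)

lemma prefix_nonneg:
  fixes p :: "nat \<Rightarrow> real"
  assumes "\<forall>i\<in>{1..K}. p i > 0" "i \<le> K"
  shows "0 \<le> (\<Sum>l=1..i. p l)"
proof (rule sum_nonneg)
  fix b assume "b \<in> {1..i}"
  then show "0 \<le> p b" using assms by (auto intro!: less_imp_le)
qed

lemma zz_nonneg:
  assumes "admissible r K x p" "1 \<le> i" "i \<le> K"
  shows "zz N p i \<ge> 0"
proof -
  have pp: "\<forall>i\<in>{1..K}. p i > 0" using assms(1) by (simp add: admissible_def)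
  have "(\<Sum>l=1..i-1. p l) \<le> (\<Sum>l=1..i. p l)" using prefix_mono[OF pp, of "i-1" i] assms by auto
  moreover have "0 \<le> (\<Sum>l=1..i-1. p l)" using prefix_nonneg[OF pp, of "i-1"] assms by auto
  ultimately show ?thesis unfolding zz_def by (simp add: power_mono)
qed

lemma reserve_props:
  assumes "K \<ge> 1"
  shows "reserve_idx K x p \<in> {1..K}"
    "\<forall>k\<in>{1..K}. x k * (\<Sum>j=k..K. p j) \<le> x (reserve_idx K x p) * (\<Sum>j=reserve_idx K x p..K. p j)"
proof -
  define R where "R k = x k * (\<Sum>j=k..K. p j)" for k
  have "\<exists>i\<in>{1..K}. \<forall>k\<in>{1..K}. R k \<le> R i"
  proof -
    have fin: "finite (R ` {1..K})" and ne: "R ` {1..K} \<noteq> {}" using assms by auto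
    obtain i where "i \<in> {1..K}" "R i = Max (R ` {1..K})" using Max_in[OF fin ne] by auto
    moreover have "\<forall>k\<in>{1..K}. R k \<le> Max (R ` {1..K})" using Max_ge[OF fin] by auto
    ultimately show ?thesis by metis
  qed
  then have ne: "{i \<in> {1..K}. \<forall>k\<in>{1..K}. R k \<le> R i} \<noteq> {}" by auto
  have fin: "finite {i \<in> {1..K}. \<forall>k\<in>{1..K}. R k \<le> R i}" by auto
  have "reserve_idx K x p = Max {i \<in> {1..K}. \<forall>k\<in>{1..K}. R k \<le> R i}"
    unfolding reserve_idx_def R_def by simp
  then have "reserve_idx K x p \<in> {i \<in> {1..K}. \<forall>k\<in>{1..K}. R k \<le> R i}"
    using Max_in[OF fin ne] by simp
  then show "reserve_idx K x p \<in> {1..K}"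
    "\<forall>k\<in>{1..K}. x k * (\<Sum>j=k..K. p j) \<le> x (reserve_idx K x p) * (\<Sum>j=reserve_idx K x p..K. p j)"
    unfolding R_def by auto
qed

lemma adm_x_bounds:
  assumes "admissible r K x p" "i \<in> {1..K}"
  shows "x 1 \<le> x i" "x i \<le> x K" "x i > 0"
proof -
  have m: "\<forall>i\<in>{1..K}. \<forall>j\<in>{1..K}. i < j \<longrightarrow> x i < x j" and x1: "0 < x 1"
    using assms(1) by (auto simp: admissible_def)
  show "x 1 \<le> x i" using m assms(2) by (cases "i = 1") (auto intro: less_imp_le)
  show "x i \<le> x K" using m assms(2) by (cases "i = K") (auto intro: less_imp_le)
  show "x i > 0" using \<open>x 1 \<le> x i\<close> x1 by linarith
qed

lemma den_lower:
  assumes "admissible r K x p" "N \<ge> 1"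
  shows "x 1 \<le> (\<Sum>i=1..K. zz N p i * x i)"
proof -
  have "x 1 = (\<Sum>i=1..K. zz N p i) * x 1"
    using sum_zz[OF assms(2), where m=K and p=p] assms(1) by (simp add: admissible_def)
  also have "\<dots> = (\<Sum>i=1..K. zz N p i * x 1)" by (simp add: sum_distrib_right)
  also have "\<dots> \<le> (\<Sum>i=1..K. zz N p i * x i)"
    by (rule sum_mono, rule mult_left_mono) (use assms adm_x_bounds zz_nonneg in auto)
  finally show ?thesis .
qed

lemma ELR_01:
  assumes "admissible r K x p" "N \<ge> 1" "K \<ge> 1"
  shows "0 \<le> ELR N K x p" "ELR N K x p \<le> 1"
proof -
  have x1: "x 1 > 0" using assms(1) by (simp add: admissible_def)
  have dpos: "0 < (\<Sum>i=1..K. zz N p i * x i)" using den_lower[OF assms(1,2)] x1 by linarith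
  have t: "reserve_idx K x p \<in> {1..K}" using reserve_props(1)[OF assms(3)] .
  have nn: "\<And>i. i \<in> {1..K} \<Longrightarrow> 0 \<le> zz N p i * x i"
    using assms(1) zz_nonneg adm_x_bounds by (meson atLeastAtMost_iff less_imp_le mult_nonneg_nonneg)
  have n0: "0 \<le> (\<Sum>i=1..reserve_idx K x p - 1. zz N p i * x i)"
    by (rule sum_nonneg) (use nn t in auto)
  have n1: "(\<Sum>i=1..reserve_idx K x p - 1. zz N p i * x i) \<le> (\<Sum>i=1..K. zz N p i * x i)"
    by (rule sum_mono2) (use nn t in auto)
  show "0 \<le> ELR N K x p" unfolding ELR_def using n0 dpos by simp
  show "ELR N K x p \<le> 1" unfolding ELR_def using n1 dpos by simp
qed

lemma ELR_upper:
  assumes "admissible r K x p" "N \<ge> 1" "K \<ge> 1"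
  shows "ELR N K x p \<le> r * (1 - 1/r) ^ N"
proof -
  define t where "t = reserve_idx K x p"
  define F where "F m = (\<Sum>j=1..m. p j)" for m
  have x1: "x 1 > 0" and s1: "F K = 1" and xK: "x K \<le> r * x 1"
    and pp: "\<forall>i\<in>{1..K}. p i > 0"
    using assms(1) by (auto simp: admissible_def F_def)
  have t: "t \<in> {1..K}" unfolding t_def using reserve_props(1)[OF assms(3)] .
  have rev: "x 1 * (\<Sum>j=1..K. p j) \<le> x t * (\<Sum>j=t..K. p j)"
    using reserve_props(2)[OF assms(3), of x p] assms(3) unfolding t_def by auto
  have Tt: "(\<Sum>j=t..K. p j) = 1 - F (t-1)"
    using tail_eq[of t K p] t s1 unfolding F_def by auto
  have xt: "0 < x t" "x t \<le> x K" using adm_x_bounds[OF assms(1) t] by auto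
  have rpos: "r > 0" using xK xt x1
    by (metis less_le_trans mult_le_0_iff not_less order_less_imp_le)
  have "x 1 \<le> x t * (1 - F (t-1))" using rev s1 Tt unfolding F_def by simp
  then have "x 1 / x t \<le> 1 - F (t-1)" using xt by (simp add: divide_simps mult.commute)
  moreover have "1 / r \<le> x 1 / x t" using xt xK rpos x1
    by (simp add: divide_simps) (smt (verit) mult.commute mult_le_cancel_left_pos)
  ultimately have Fle: "F (t-1) \<le> 1 - 1/r" by linarith
  have F0: "0 \<le> F (t-1)" unfolding F_def using prefix_nonneg[OF pp, of "t-1"] t by auto
  have nn: "\<And>i. i \<in> {1..K} \<Longrightarrow> 0 \<le> zz N p i"
    using assms(1) zz_nonneg by auto
  have "(\<Sum>i=1..t-1. zz N p i * x i) \<le> (\<Sum>i=1..t-1. zz N p i * x K)"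
    by (rule sum_mono, rule mult_left_mono) (use nn t adm_x_bounds[OF assms(1)] in auto)
  also have "\<dots> = x K * F (t-1) ^ N"
    using sum_zz[OF assms(2), where m="t-1" and p=p] unfolding F_def
    by (simp add: sum_distrib_left[symmetric] mult.commute)
  also have "\<dots> \<le> r * x 1 * (1 - 1/r) ^ N"
    using xK F0 Fle xt by (intro mult_mono power_mono) auto
  finally have num: "(\<Sum>i=1..t-1. zz N p i * x i) \<le> r * x 1 * (1 - 1/r) ^ N" .
  have n0: "0 \<le> (\<Sum>i=1..t-1. zz N p i * x i)"
  proof (rule sum_nonneg)
    fix i assume "i \<in> {1..t-1}"
    then have i: "i \<in> {1..K}" using t by auto
    show "0 \<le> zz N p i * x i" using nn[OF i] adm_x_bounds(3)[OF assms(1) i] by simp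
  qed
  have den: "x 1 \<le> (\<Sum>i=1..K. zz N p i * x i)" using den_lower[OF assms(1,2)] .
  have "ELR N K x p \<le> (\<Sum>i=1..t-1. zz N p i * x i) / x 1"
    unfolding ELR_def t_def[symmetric] using den n0 x1 by (intro divide_left_mono) auto
  also have "\<dots> \<le> r * (1 - 1/r) ^ N" using num x1 by (simp add: divide_simps mult.commute mult.left_commute)
  finally show ?thesis .
qed

lemma adm_exists:
  assumes "r > 1" "K \<ge> 1"
  shows "\<exists>x p. admissible r K x p"
proof -
  define x where "x i = 1 + (real i - 1) * (r - 1) / real K" for i :: nat
  define p where "p i = 1 / real K" for i :: nat
  have Kp: "real K > 0" using assms by simp
  have "admissible r K x p"
    unfolding admissible_def
  proof (intro conjI ballI impI)
    show "\<And>i. 0 < p i" using Kp by (simp add: p_def)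
    show "(\<Sum>i=1..K. p i) = 1" using Kp by (simp add: p_def)
    show "0 < x 1" by (simp add: x_def)
    show "x i < x j" if "i < j" for i j
    proof -
      have "(real i - 1) * (r - 1) < (real j - 1) * (r - 1)" using that assms by (intro mult_strict_right_mono) auto
      then show ?thesis unfolding x_def using Kp by (simp add: divide_strict_right_mono)
    qed
    show "x K \<le> r * x 1"
    proof -
      have "(real K - 1) * (r - 1) \<le> real K * (r - 1)" using assms by (intro mult_right_mono) auto
      then have "(real K - 1) * (r - 1) / real K \<le> r - 1" using Kp by (simp add: divide_simps mult.commute)
      then show ?thesis by (simp add: x_def)
    qed
  qed
  then show ?thesis by blast
qed

lemma eta_facts:
  assumes "r > 1" "K \<ge> 1" "N \<ge> 1"
  shows "bdd_above {ELR N K x p | x p. admissible r K x p}"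
    "{ELR N K x p | x p. admissible r K x p} \<noteq> {}"
    "0 \<le> eta r K N" "eta r K N \<le> 1" "eta r K N \<le> r * (1 - 1/r) ^ N"
    "\<And>x p. admissible r K x p \<Longrightarrow> ELR N K x p \<le> eta r K N"
proof -
  let ?S = "{ELR N K x p | x p. admissible r K x p}"
  show bdd: "bdd_above ?S" unfolding bdd_above_def using ELR_01(2) assms by blast
  obtain x p where a: "admissible r K x p" using adm_exists[OF assms(1,2)] by blast
  show ne: "?S \<noteq> {}" using a by blast
  show ge: "\<And>x p. admissible r K x p \<Longrightarrow> ELR N K x p \<le> eta r K N"
    unfolding eta_def by (rule cSup_upper) (use bdd in auto)
  show "0 \<le> eta r K N" using ge[OF a] ELR_01(1)[OF a assms(3,2)] by linarith
  show "eta r K N \<le> 1" unfolding eta_def by (rule cSup_least) (use ne ELR_01(2) assms in auto)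
  show "eta r K N \<le> r * (1 - 1/r) ^ N" unfolding eta_def
    by (rule cSup_least) (use ne ELR_upper assms in auto)
qed

lemma frac_mono_aux:
  fixes a b d :: real
  assumes "0 \<le> a" "a \<le> b" "0 < b" "0 \<le> d"
  shows "a / b \<le> (a + d) / (b + d)"
proof -
  have "a * (b + d) \<le> (a + d) * b" using assms by (simp add: algebra_simps mult_right_mono)
  then show ?thesis using assms by (simp add: divide_simps)
qed

lemma ELR_extend:
  assumes adm: "admissible r K x p" and K2: "K \<ge> 2" and N1: "N \<ge> 1"
  shows "\<exists>x' p'. admissible r (Suc K) x' p' \<and> ELR N K x p \<le> ELR N (Suc K) x' p'"
proof -
  define F where "F m = (\<Sum>j=1..m. p j)" for m
  have x1: "x 1 > 0" and s1: "F K = 1" and xK: "x K \<le> r * x 1"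
    and pp: "\<forall>i\<in>{1..K}. p i > 0" and xm: "\<forall>i\<in>{1..K}. \<forall>j\<in>{1..K}. i < j \<longrightarrow> x i < x j"
    using adm by (auto simp: admissible_def F_def)
  have K1: "K \<ge> 1" using K2 by simp
  define rv where "rv k = x k * (\<Sum>j=k..K. p j)" for k
  define t where "t = reserve_idx K x p"
  have t: "t \<in> {1..K}" unfolding t_def using reserve_props(1)[OF K1] .
  have tmax: "\<forall>k\<in>{1..K}. rv k \<le> rv t" unfolding rv_def t_def using reserve_props(2)[OF K1] .
  have rvF: "rv k = x k * (1 - F (k - 1))" if "k \<in> {1..K}" for k
    using tail_eq[of k K p] that s1 unfolding rv_def F_def by auto
  define M where "M = rv t"
  have p1: "p 1 > 0" and p2: "p 2 > 0" using pp K2 by auto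
  have F1: "F 1 = p 1" by (simp add: F_def)
  have F2: "F 2 = p 1 + p 2" by (simp add: F_def numeral_2_eq_2)
  have "F 2 \<le> F K" unfolding F_def by (rule prefix_mono[OF pp]) (use K2 in auto)
  then have a: "1 - p 1 > 0" using F2 s1 p2 by linarith
  have x12: "x 1 < x 2" using xm K2 by auto
  define y where "y = (x 1 + x 2) / 2"
  have y: "x 1 < y" "y < x 2" "y > 0" using x12 x1 by (auto simp: y_def)
  have "rv 2 = x 2 * (1 - p 1)" using rvF[of 2] K2 F1 by auto
  moreover have "rv 2 \<le> rv t" using tmax K2 by auto
  ultimately have "M \<ge> x 2 * (1 - p 1)" unfolding M_def by simp
  moreover have "x 2 * (1 - p 1) > y * (1 - p 1)" using y a by (intro mult_strict_right_mono) auto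
  ultimately have gpos: "M - y * (1 - p 1) > 0" by linarith
  define g where "g = M - y * (1 - p 1)"
  define e where "e = min (p 1 / 2) (g / (2 * y))"
  have gp: "g > 0" using gpos g_def by simp
  have e: "0 < e" "e < p 1" "y * e < g"
  proof -
    show "0 < e" using p1 gp y unfolding e_def by auto
    show "e < p 1" using p1 unfolding e_def by auto
    have "e \<le> g / (2 * y)" unfolding e_def by auto
    then have "y * e \<le> y * (g / (2 * y))" using y by (intro mult_left_mono) auto
    also have "\<dots> = g / 2" using y by simp
    finally show "y * e < g" using gp by linarith
  qed
  define x' where "x' i = (if i \<le> 1 then x i else if i = 2 then y else x (i - 1))" for i
  define p' where "p' i = (if i \<le> 1 then p 1 - e else if i = 2 then e else p (i - 1))" for i
  define F' where "F' m = (\<Sum>j=1..m. p' j)" for m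
  have F'0: "F' 0 = 0" by (simp add: F'_def)
  have F'1: "F' 1 = p 1 - e" by (simp add: F'_def p'_def)
  have F'S: "F' (Suc m) = F m" if "m \<ge> 1" for m
    using that
  proof (induction m rule: dec_induct)
    case base
    then show ?case by (simp add: F'_def F_def p'_def numeral_2_eq_2)
  next
    case (step m)
    have "F' (Suc (Suc m)) = F' (Suc m) + p' (Suc (Suc m))" by (simp add: F'_def)
    also have "\<dots> = F m + p (Suc m)" using step by (simp add: p'_def)
    also have "\<dots> = F (Suc m)" by (simp add: F_def)
    finally show ?case .
  qed
  have adm': "admissible r (Suc K) x' p'"
    unfolding admissible_def
  proof (intro conjI ballI impI)
    fix i assume i: "i \<in> {1..Suc K}"
    show "0 < p' i"
    proof (cases "i \<le> 1")
      case True then show ?thesis using e by (simp add: p'_def)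
    next
      case False
      then have "i - 1 \<in> {1..K}" using i by auto
      then show ?thesis using e pp False by (auto simp: p'_def)
    qed
  next
    show "(\<Sum>i=1..Suc K. p' i) = 1" using F'S[OF K1] s1 by (simp add: F'_def)
  next
    show "0 < x' 1" using x1 by (simp add: x'_def)
  next
    fix i j assume i: "i \<in> {1..Suc K}" and j: "j \<in> {1..Suc K}" and ij: "i < j"
    show "x' i < x' j"
    proof (cases "j = 2")
      case True
      then have "i = 1" using i ij by auto
      then show ?thesis using True y by (simp add: x'_def)
    next
      case jn2: False
      then have j3: "j \<ge> 3" using ij i by auto
      then have xj: "x' j = x (j - 1)" by (simp add: x'_def)
      show ?thesis
      proof (cases "i \<le> 2")
        case True
        have "x' i \<le> y" using True i y by (auto simp: x'_def)
        moreover have "x 2 \<le> x (j - 1)"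
        proof (cases "j = 3")
          case True then show ?thesis by simp
        next
          case False
          then have "2 < j - 1" "j - 1 \<le> K" using j3 j by auto
          then show ?thesis using xm K2 by (auto intro: less_imp_le)
        qed
        ultimately show ?thesis using xj y by linarith
      next
        case False
        then have "i - 1 \<in> {1..K}" "j - 1 \<in> {1..K}" "i - 1 < j - 1" using i j ij by auto
        then have "x (i - 1) < x (j - 1)" using xm by blast
        then show ?thesis using False ij by (auto simp: x'_def)
      qed
    qed
  next
    show "x' (Suc K) \<le> r * x' 1" using xK K2 by (simp add: x'_def)
  qed
  define rv' where "rv' k = x' k * (\<Sum>j=k..Suc K. p' j)" for k
  have s1': "F' (Suc K) = 1" using F'S[OF K1] s1 by simp
  have rvF': "rv' k = x' k * (1 - F' (k - 1))" if "k \<in> {1..Suc K}" for k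
    using tail_eq[of k "Suc K" p'] that s1' unfolding rv'_def F'_def by auto
  have rv'1: "rv' 1 = rv 1" using rvF'[of 1] rvF[of 1] K1 F'0 by (simp add: x'_def F_def)
  have rv'2: "rv' 2 < M"
  proof -
    have "rv' 2 = y * (1 - (p 1 - e))" using rvF'[of 2] K1 F'1 by (simp add: x'_def)
    also have "\<dots> = y * (1 - p 1) + y * e" by (simp add: algebra_simps)
    finally show ?thesis using e(3) unfolding g_def by linarith
  qed
  have rv'S: "rv' (Suc k) = rv k" if "k \<in> {2..K}" for k
  proof -
    have "rv' (Suc k) = x k * (1 - F' k)" using rvF'[of "Suc k"] that by (simp add: x'_def)
    also have "\<dots> = x k * (1 - F (k - 1))"
    proof -
      have "Suc (k - 1) = k" using that by auto
      then have "F' k = F (k - 1)" using F'S[of "k - 1"] that by auto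
      then show ?thesis by simp
    qed
    also have "\<dots> = rv k" using rvF[of k] that by simp
    finally show ?thesis .
  qed
  show ?thesis
  proof (cases "t = 1")
    case True
    have "ELR N K x p = 0" unfolding ELR_def t_def[symmetric] True by simp
    then show ?thesis using ELR_01(1)[OF adm' N1] adm' by auto
  next
    case False
    then have t2: "t \<ge> 2" using t by auto
    define A' where "A' = {i \<in> {1..Suc K}. \<forall>k\<in>{1..Suc K}. rv' k \<le> rv' i}"
    define A where "A = {i \<in> {1..K}. \<forall>k\<in>{1..K}. rv k \<le> rv i}"
    have tA: "t = Max A" unfolding t_def A_def rv_def reserve_idx_def by simp
    have t'A: "reserve_idx (Suc K) x' p' = Max A'" unfolding A'_def rv'_def reserve_idx_def by simp
    have rvall: "rv' k \<le> M" if "k \<in> {1..Suc K}" for k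
    proof -
      have k1: "1 \<le> k" using that by auto
      consider "k = 1" | "k = 2" | "k \<ge> 3" using k1 by linarith
      then show ?thesis
      proof cases
        case 1 then show ?thesis using rv'1 tmax K1 unfolding M_def by auto
      next
        case 2 then show ?thesis using rv'2 by simp
      next
        case 3
        then have k2: "k - 1 \<in> {2..K}" "Suc (k - 1) = k" using that by auto
        then have "rv' k = rv (k - 1)" using rv'S[of "k - 1"] by metis
        moreover have "rv (k - 1) \<le> rv t" using tmax k2(1) by auto
        ultimately show ?thesis unfolding M_def by simp
      qed
    qed
    have rvt': "rv' (Suc t) = M" using rv'S[of t] t t2 unfolding M_def by auto
    have in': "Suc t \<in> A'" unfolding A'_def using rvall rvt' t by auto
    have le': "i \<le> Suc t" if "i \<in> A'" for i
    proof -
      have i: "i \<in> {1..Suc K}" and im: "\<forall>k\<in>{1..Suc K}. rv' k \<le> rv' i" using that by (auto simp: A'_def)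
      have i1: "1 \<le> i" using i by auto
      consider "i = 1" | "i = 2" | "i \<ge> 3" using i1 by linarith
      then show ?thesis
      proof cases
        case 1 then show ?thesis by simp
      next
        case 2
        then have "M \<le> rv' 2" using im rvt' t by force
        then show ?thesis using rv'2 by simp
      next
        case 3
        have "i - 1 \<in> {2..K}" "Suc (i - 1) = i" using i 3 by auto
        then have ri: "rv' i = rv (i - 1)" using rv'S[of "i - 1"] by metis
        have "i - 1 \<in> A" unfolding A_def
        proof (intro CollectI conjI ballI)
          show "i - 1 \<in> {1..K}" using i 3 by auto
          fix k assume k: "k \<in> {1..K}"
          show "rv k \<le> rv (i - 1)"
          proof (cases "k = 1")
            case True then show ?thesis using im rv'1 ri by force
          next
            case False
            then have "rv k = rv' (Suc k)" using rv'S[of k] k by auto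
            then show ?thesis using im ri k by force
          qed
        qed
        then have "i - 1 \<le> t" unfolding tA by (rule Max_ge[rotated]) (simp add: A_def)
        then show ?thesis by simp
      qed
    qed
    have t': "reserve_idx (Suc K) x' p' = Suc t"
      unfolding t'A by (rule Max_eqI) (use in' le' in \<open>auto simp: A'_def\<close>)
    define d where "d = (y - x 1) * (p 1 ^ N - (p 1 - e) ^ N)"
    have sumS: "(\<Sum>i=1..Suc m. zz N p' i * x' i) = (\<Sum>i=1..m. zz N p i * x i) + d"
      if "m \<ge> 1" for m
      using that
    proof (induction m rule: dec_induct)
      case base
      have "(\<Sum>i=1..Suc 1. zz N p' i * x' i) = zz N p' 1 * x' 1 + zz N p' 2 * x' 2"
        by (simp add: numeral_2_eq_2)
      also have "\<dots> = (p 1 - e) ^ N * x 1 + (p 1 ^ N - (p 1 - e) ^ N) * y"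
        using F'S[of 1] F'0 F'1 N1 unfolding zz_def F'_def F_def by (simp add: x'_def numeral_2_eq_2)
      also have "\<dots> = p 1 ^ N * x 1 + d" unfolding d_def by (simp add: algebra_simps)
      also have "\<dots> = (\<Sum>i=1..1. zz N p i * x i) + d" using N1 by (simp add: zz_def)
      finally show ?case .
    next
      case (step m)
      have z: "zz N p' (Suc (Suc m)) = zz N p (Suc m)"
        using F'S[of "Suc m"] F'S[of m] step(1) unfolding zz_def F'_def F_def by simp
      have "(\<Sum>i=1..Suc (Suc m). zz N p' i * x' i) = (\<Sum>i=1..Suc m. zz N p' i * x' i) + zz N p' (Suc (Suc m)) * x' (Suc (Suc m))"
        by simp
      also have "\<dots> = (\<Sum>i=1..m. zz N p i * x i) + d + zz N p (Suc m) * x (Suc m)"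
        using step z by (simp add: x'_def)
      also have "\<dots> = (\<Sum>i=1..Suc m. zz N p i * x i) + d" by simp
      finally show ?case .
    qed
    have num': "(\<Sum>i=1..reserve_idx (Suc K) x' p' - 1. zz N p' i * x' i) = (\<Sum>i=1..t - 1. zz N p i * x i) + d"
      using sumS[of "t - 1"] t2 t' by simp
    have den': "(\<Sum>i=1..Suc K. zz N p' i * x' i) = (\<Sum>i=1..K. zz N p i * x i) + d"
      using sumS[OF K1] .
    have d0: "d \<ge> 0" unfolding d_def using y e by (intro mult_nonneg_nonneg) (auto intro!: power_mono)
    have nn: "\<And>i. i \<in> {1..K} \<Longrightarrow> 0 \<le> zz N p i * x i"
      using adm zz_nonneg adm_x_bounds by (meson atLeastAtMost_iff less_imp_le mult_nonneg_nonneg)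
    have n0: "0 \<le> (\<Sum>i=1..t - 1. zz N p i * x i)"
      by (rule sum_nonneg) (use nn t in auto)
    have n1: "(\<Sum>i=1..t - 1. zz N p i * x i) \<le> (\<Sum>i=1..K. zz N p i * x i)"
      by (rule sum_mono2) (use nn t in auto)
    have dpos: "0 < (\<Sum>i=1..K. zz N p i * x i)" using den_lower[OF adm N1] x1 by linarith
    have "ELR N K x p \<le> ELR N (Suc K) x' p'"
      unfolding ELR_def num' den' t_def[symmetric] using frac_mono_aux[OF n0 n1 dpos d0] .
    then show ?thesis using adm' by blast
  qed
qed

lemma eta_mono:
  assumes "r > 1" "K \<ge> 2" "N \<ge> 1"
  shows "eta r K N \<le> eta r (Suc K) N"
proof -
  have K1: "K \<ge> 1" using assms by simp
  show ?thesis unfolding eta_def[of r K N]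
  proof (rule cSup_least)
    show "{ELR N K x p |x p. admissible r K x p} \<noteq> {}" using eta_facts(2)[OF assms(1) K1 assms(3)] .
    fix v assume "v \<in> {ELR N K x p |x p. admissible r K x p}"
    then obtain x p where a: "admissible r K x p" and v: "v = ELR N K x p" by auto
    obtain x' p' where a': "admissible r (Suc K) x' p'" and le: "ELR N K x p \<le> ELR N (Suc K) x' p'"
      using ELR_extend[OF a assms(2,3)] by blast
    show "v \<le> eta r (Suc K) N" using v le eta_facts(6)[OF assms(1) _ assms(3) a'] by simp
  qed
qed

lemma pow_diff_lower:
  fixes u v :: real
  assumes "0 \<le> v" "v \<le> u" "N \<ge> 1"
  shows "(u - v) * v ^ (N - 1) \<le> u ^ N - v ^ N"
proof -
  have eN: "u ^ N = u * u ^ (N - 1)" "v ^ N = v * v ^ (N - 1)" using assms(3)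
    by (metis Suc_diff_1 less_le_trans zero_less_one power_Suc)+
  have "u * v ^ (N - 1) \<le> u * u ^ (N - 1)" using assms by (intro mult_left_mono power_mono) auto
  then show ?thesis using eN by (simp add: algebra_simps)
qed

lemma eta_geom_lower:
  assumes K2: "K \<ge> 2" and N1: "N \<ge> 1" and r: "r \<ge> 2 ^ (K - 1)"
  shows "1 - real N / ((real K - 2) * (1/2) ^ N + real N) \<le> eta r K N"
proof -
  have K1: "K \<ge> 1" using K2 by simp
  have r1: "r > 1"
  proof -
    have "(2::real) ^ 1 \<le> 2 ^ (K - 1)" using K2 by (intro power_increasing) auto
    then show ?thesis using r by simp
  qed
  define T where "T k = (if k \<le> K then (1/2::real) ^ (k - 1) else 0)" for k
  define p where "p k = T k - T (Suc k)" for k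
  define x where "x k = (2::real) ^ (k - 1)" for k
  have F: "(\<Sum>j=1..i. p j) = 1 - T (Suc i)" for i
  proof (induction i)
    case 0 then show ?case using K1 by (simp add: T_def)
  next
    case (Suc i) then show ?case by (simp add: p_def)
  qed
  have TK: "T (Suc K) = 0" by (simp add: T_def)
  have adm: "admissible r K x p"
    unfolding admissible_def
  proof (intro conjI ballI impI)
    fix i assume i: "i \<in> {1..K}"
    show "0 < p i"
    proof (cases "i = K")
      case True then show ?thesis by (simp add: p_def T_def)
    next
      case False
      then have "Suc i \<le> K" using i by auto
      moreover have "(1/2::real) ^ i < (1/2) ^ (i - 1)" using i by (intro power_strict_decreasing) auto
      ultimately show ?thesis using i by (simp add: p_def T_def)
    qed
  next
    show "(\<Sum>i=1..K. p i) = 1" using F TK by simp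
    show "0 < x 1" by (simp add: x_def)
    fix i j assume "i \<in> {1..K}" "j \<in> {1..K}" "i < j"
    then show "x i < x j" unfolding x_def by (intro power_strict_increasing) auto
  next
    show "x K \<le> r * x 1" using r by (simp add: x_def)
  qed
  have tailT: "(\<Sum>j=k..K. p j) = T k" if "k \<in> {1..K}" for k
    using tail_eq[of k K p] that F[of K] F[of "k - 1"] TK by auto
  have rev1: "x k * (\<Sum>j=k..K. p j) = 1" if "k \<in> {1..K}" for k
    using tailT[OF that] that by (simp add: x_def T_def power_one_over)
  have res: "reserve_idx K x p = K"
    unfolding reserve_idx_def
  proof (rule Max_eqI)
    have "x K * (\<Sum>j=K..K. p j) = 1" using rev1[of K] K1 by auto
    then show "K \<in> {i \<in> {1..K}. \<forall>k\<in>{1..K}. x k * (\<Sum>j=k..K. p j) \<le> x i * (\<Sum>j=i..K. p j)}"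
      using rev1 K1 by auto
  qed auto
  define c where "c = (1/2::real) ^ N"
  have zzF: "zz N p i = (1 - T (Suc i)) ^ N - (1 - T i) ^ N" if "i \<ge> 1" for i
    using F[of i] F[of "i - 1"] that by (simp add: zz_def)
  have mid: "c \<le> zz N p i * x i" if "i \<in> {2..K-1}" for i
  proof -
    define a where "a = (1/2::real) ^ (i - 1)"
    have i2: "i \<ge> 2" "Suc i \<le> K" using that by auto
    have Ti: "T i = a" "T (Suc i) = a / 2"
    proof -
      show "T i = a" using i2 unfolding T_def a_def by simp
      have "i = Suc (i - 1)" using i2 by simp
      then have "(1/2::real) ^ i = (1/2) * (1/2) ^ (i - 1)" by (metis power_Suc)
      then show "T (Suc i) = a / 2" using i2 unfolding T_def a_def by simp
    qed
    have a: "a \<le> 1/2" "0 < a"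
    proof -
      have "(1/2::real) ^ (i - 1) \<le> (1/2) ^ 1" using that by (intro power_decreasing) auto
      then show "a \<le> 1/2" unfolding a_def by simp
      show "0 < a" unfolding a_def by simp
    qed
    have xa: "x i * a = 1" unfolding x_def a_def by (simp add: power_one_over)
    have "(a / 2) * (1/2) ^ (N - 1) \<le> ((1 - a/2) - (1 - a)) * (1 - a) ^ (N - 1)"
      using a by (intro mult_mono power_mono) auto
    also have "\<dots> \<le> zz N p i" using zzF[of i] that Ti pow_diff_lower[of "1 - a" "1 - a/2" N] a N1 by auto
    finally have "(a / 2) * (1/2) ^ (N - 1) * x i \<le> zz N p i * x i"
      by (rule mult_right_mono) (simp add: x_def)
    moreover have "(a / 2) * (1/2) ^ (N - 1) * x i = c"
    proof -
      have "(1/2::real) * (1/2) ^ (N - 1) = c" unfolding c_def using N1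
        by (metis Suc_diff_1 less_le_trans zero_less_one power_Suc)
      then show ?thesis using xa by (simp add: algebra_simps)
    qed
    ultimately show ?thesis by simp
  qed
  have top: "zz N p K * x K \<le> real N" "0 \<le> zz N p K * x K"
  proof -
    define a where "a = (1/2::real) ^ (K - 1)"
    have Ti: "T K = a" unfolding T_def a_def by simp
    have a: "0 < a" "a \<le> 1" unfolding a_def by (auto simp: power_le_one)
    have z: "zz N p K = 1 - (1 - a) ^ N" using zzF[of K] K1 TK Ti by simp
    have "1 + real N * (- a) \<le> (1 + (- a)) ^ N" by (rule Bernoulli_inequality) (use a in auto)
    then have "zz N p K \<le> real N * a" using z by simp
    then have "zz N p K * x K \<le> real N * a * x K" by (rule mult_right_mono) (simp add: x_def)
    also have "\<dots> = real N" unfolding a_def x_def by (simp add: power_one_over)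
    finally show "zz N p K * x K \<le> real N" .
    show "0 \<le> zz N p K * x K" using zz_nonneg[OF adm, of K N] K1 by (simp add: x_def)
  qed
  define Aa where "Aa = (\<Sum>i=1..K-1. zz N p i * x i)"
  define B where "B = zz N p K * x K"
  have Aa: "(real K - 2) * c \<le> Aa"
  proof -
    have s: "{1..K-1} = {1} \<union> {2..K-1}" using K2 by auto
    have "Aa = zz N p 1 * x 1 + (\<Sum>i=2..K-1. zz N p i * x i)"
      unfolding Aa_def s by (subst sum.union_disjoint) auto
    moreover have "0 \<le> zz N p 1 * x 1" using zz_nonneg[OF adm, of 1 N] K1 by (simp add: x_def)
    moreover have "(\<Sum>i=2..K-1. c) \<le> (\<Sum>i=2..K-1. zz N p i * x i)" by (rule sum_mono) (use mid in auto)
    moreover have "(\<Sum>i=2..K-1. c) = (real K - 2) * c" using K2 by (simp add: of_nat_diff)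
    ultimately show ?thesis by linarith
  qed
  have c0: "c > 0" unfolding c_def by simp
  have Kc: "0 \<le> (real K - 2) * c" using K2 c0 by simp
  have den: "(\<Sum>i=1..K. zz N p i * x i) = Aa + B"
  proof -
    have "{1..K} = insert K {1..K-1}" using K1 by auto
    moreover have "K \<notin> {1..K-1}" using K1 by auto
    ultimately show ?thesis unfolding Aa_def B_def by (simp add: sum.insert add.commute)
  qed
  have ELR: "ELR N K x p = Aa / (Aa + B)" unfolding ELR_def res den Aa_def by simp
  have Np: "real N > 0" using N1 by simp
  have "1 - real N / ((real K - 2) * c + real N) \<le> 1 - real N / (Aa + real N)"
  proof -
    have "(real K - 2) * c * real N \<le> Aa * real N" using Aa Np by (intro mult_right_mono) auto
    then have "(real K - 2) * c * (Aa + real N) \<le> Aa * ((real K - 2) * c + real N)"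
      by (simp add: algebra_simps)
    then show ?thesis using Aa Kc Np by (simp add: divide_simps)
  qed
  also have "\<dots> \<le> Aa / (Aa + B)"
  proof -
    have A0: "Aa \<ge> 0" using Aa Kc by linarith
    have "B * (Aa + real N) \<le> real N * (Aa + B)" using top A0 unfolding B_def
      by (simp add: algebra_simps mult_left_mono)
    then have "B / (Aa + B) \<le> real N / (Aa + real N)"
    proof (cases "Aa + B = 0")
      case True then show ?thesis using A0 Np by simp
    next
      case False
      then have "Aa + B > 0" using A0 top unfolding B_def by linarith
      then show ?thesis using A0 Np \<open>B * (Aa + real N) \<le> real N * (Aa + B)\<close> by (simp add: divide_simps)
    qed
    moreover have "Aa / (Aa + B) = 1 - B / (Aa + B)" if "Aa + B \<noteq> 0" using that by (simp add: divide_simps)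
    moreover have "Aa = 0" if "Aa + B = 0"
      using that A0 top unfolding B_def by simp
    ultimately show ?thesis using Np by (cases "Aa + B = 0") auto
  qed
  finally have "1 - real N / ((real K - 2) * c + real N) \<le> ELR N K x p" using ELR by simp
  also have "\<dots> \<le> eta r K N" using eta_facts(6)[OF r1 K1 N1 adm] .
  finally show ?thesis unfolding c_def .
qed

lemma part2:
  assumes "r > 1" "K > 2"
  shows "((\<lambda>N. eta r K N) \<longlongrightarrow> 0) sequentially"
proof (rule tendsto_sandwich[of "\<lambda>_. 0" _ _ "\<lambda>N. r * (1 - 1/r) ^ N"])
  have K1: "K \<ge> 1" using assms by simp
  show "\<forall>\<^sub>F N in sequentially. 0 \<le> eta r K N"
    by (rule eventually_mono[OF eventually_ge_at_top[of 1]]) (rule eta_facts(3)[OF assms(1) K1])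
  show "\<forall>\<^sub>F N in sequentially. eta r K N \<le> r * (1 - 1/r) ^ N"
    by (rule eventually_mono[OF eventually_ge_at_top[of 1]]) (rule eta_facts(5)[OF assms(1) K1])
  show "((\<lambda>_. 0::real) \<longlongrightarrow> 0) sequentially" by simp
  have "norm (1 - 1/r) < 1" using assms by auto
  then have "(\<lambda>N. (1 - 1/r) ^ N) \<longlonglongrightarrow> 0" by (rule LIMSEQ_power_zero)
  then show "(\<lambda>N. r * (1 - 1/r) ^ N) \<longlonglongrightarrow> 0" by (rule tendsto_mult_right_zero)
qed

lemma part4:
  assumes "r > 1" "K > 2"
  shows "(\<lambda>N. eta r K N) \<in> O(\<lambda>N. (1 - 1/r) ^ N)"
proof (rule bigoI[where c = r])
  have K1: "K \<ge> 1" using assms by simp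
  have q: "0 \<le> 1 - 1/r" using assms by auto
  show "\<forall>\<^sub>F N in sequentially. norm (eta r K N) \<le> r * norm ((1 - 1/r) ^ N)"
  proof (rule eventually_mono[OF eventually_ge_at_top[of 1]])
    fix N :: nat assume N: "1 \<le> N"
    have "0 \<le> eta r K N" "eta r K N \<le> r * (1 - 1/r) ^ N" using eta_facts(3,5)[OF assms(1) K1 N] by auto
    moreover have "norm ((1 - 1/r) ^ N) = (1 - 1/r) ^ N" using q by simp
    ultimately show "norm (eta r K N) \<le> r * norm ((1 - 1/r) ^ N)" by simp
  qed
qed

lemma eta_limit:
  assumes "r > 1" "N \<ge> 1"
  shows "(\<lambda>K. eta r K N) \<longlonglongrightarrow> lim (\<lambda>K. eta r K N)"
    "lim (\<lambda>K. eta r K N) \<le> 1"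
    "\<And>K. K \<ge> 2 \<Longrightarrow> eta r K N \<le> lim (\<lambda>K. eta r K N)"
proof -
  define X where "X K = eta r (K + 2) N" for K
  have inc: "incseq X" unfolding X_def
    by (rule incseq_SucI) (use eta_mono[OF assms(1) _ assms(2)] in auto)
  have bd: "\<forall>i. X i \<le> 1" unfolding X_def using eta_facts(4)[OF assms(1) _ assms(2)] by simp
  obtain L where L: "X \<longlonglongrightarrow> L" "\<forall>i. X i \<le> L" using incseq_convergent[OF inc bd] by blast
  have lim: "(\<lambda>K. eta r K N) \<longlonglongrightarrow> L" using L(1) unfolding X_def by (rule LIMSEQ_offset)
  then have lL: "lim (\<lambda>K. eta r K N) = L" by (rule limI)
  show "(\<lambda>K. eta r K N) \<longlonglongrightarrow> lim (\<lambda>K. eta r K N)" using lim lL by simp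
  show "lim (\<lambda>K. eta r K N) \<le> 1" unfolding lL using L(1) bd by (intro LIMSEQ_le_const2) auto
  fix K :: nat assume "K \<ge> 2"
  then have "K - 2 + 2 = K" by simp
  then have "eta r K N = X (K - 2)" unfolding X_def by metis
  then show "eta r K N \<le> lim (\<lambda>K. eta r K N)" using L(2) lL by simp
qed

lemma part3:
  assumes N1: "N \<ge> 1"
  shows "\<exists>f :: real \<Rightarrow> real.
            (\<forall>r>1. ((\<lambda>K. eta r K N) \<longlongrightarrow> f r) sequentially) \<and> (f \<longlongrightarrow> 1) at_top"
proof (intro exI conjI allI impI)
  define f where "f r = lim (\<lambda>K. eta r K N)" for r
  show "((\<lambda>K. eta r K N) \<longlongrightarrow> f r) sequentially" if "r > 1" for r
    unfolding f_def using eta_limit(1)[OF that N1] .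
  show "(f \<longlongrightarrow> 1) at_top"
    unfolding tendsto_iff
  proof (intro allI impI)
    fix e :: real assume e: "e > 0"
    define c where "c = (1/2::real) ^ N"
    have c: "c > 0" unfolding c_def by simp
    have Np: "real N > 0" using N1 by simp
    define K where "K = nat \<lceil>real N / (e * c)\<rceil> + 2"
    have K2: "K \<ge> 2" unfolding K_def by simp
    have "real N / (e * c) \<le> real K - 2" 
    proof -
      have "real N / (e * c) \<le> real (nat \<lceil>real N / (e * c)\<rceil>)" by linarith
      moreover have "real K - 2 = real (nat \<lceil>real N / (e * c)\<rceil>)" unfolding K_def by simp
      ultimately show ?thesis by simp
    qed
    then have "real N / e \<le> (real K - 2) * c" using c e by (simp add: field_simps)
    then have "real N / e < (real K - 2) * c + real N" using Np by linarith
    then have "real N < e * ((real K - 2) * c + real N)" using e by (simp add: divide_simps mult.commute)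
    moreover have "(real K - 2) * c + real N > 0" using Np \<open>real N / e < (real K - 2) * c + real N\<close> e
      by (smt (verit) divide_nonneg_pos)
    ultimately have small: "real N / ((real K - 2) * c + real N) < e"
      by (simp add: divide_simps mult.commute)
    show "\<forall>\<^sub>F r in at_top. dist (f r) 1 < e"
    proof (rule eventually_mono[OF eventually_ge_at_top[of "max 2 (2 ^ (K - 1))"]])
      fix r :: real assume r: "max 2 (2 ^ (K - 1)) \<le> r"
      then have r1: "r > 1" by simp
      have "1 - real N / ((real K - 2) * c + real N) \<le> eta r K N"
        using eta_geom_lower[OF K2 N1] r unfolding c_def by simp
      also have "\<dots> \<le> f r" unfolding f_def using eta_limit(3)[OF r1 N1 K2] .
      finally have lo: "1 - e < f r" using small by linarith
      have hi: "f r \<le> 1" unfolding f_def using eta_limit(2)[OF r1 N1] .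
      show "dist (f r) 1 < e" using lo hi by (simp add: dist_real_def)
    qed
  qed
qed

lemma gamma_bounds:
  assumes r: "r > 1" and N1: "N \<ge> 1" and K3: "K \<ge> 3"
  shows "0 \<le> gamma1 r K N" "0 \<le> gamma2 r K N - gamma1 r K N"
    "gamma2 r K N - gamma1 r K N \<le> real N * r / (real K - 1)"
proof -
  define q where "q = 1 - 1/r"
  define s where "s = 1 / (real K - 1)"
  have q: "0 < q" "q < 1" unfolding q_def using r by auto
  have s: "0 < s" "s \<le> 1" unfolding s_def using K3 by auto
  have cdef: "1 - 1 / (real K - 1) = 1 - s" unfolding s_def ..
  define f1 where "f1 i = (if i \<ge> N then (1 / real i) * q ^ i * (1 - s) ^ i else 0)" for i :: nat
  define f2 where "f2 i = (if i \<ge> N then (1 / real i) * q ^ i else 0)" for i :: nat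
  have g1: "gamma1 r K N = real N * suminf f1" unfolding gamma1_def f1_def q_def cdef ..
  have g2: "gamma2 r K N = real N * suminf f2" unfolding gamma2_def f2_def q_def ..
  have geo: "summable (\<lambda>i. q ^ i)" using q by (intro summable_geometric) auto
  have inv_le: "1 / real i \<le> 1" if "i \<ge> N" for i
    using that N1 by (simp add: divide_simps)
  have f1b: "0 \<le> f1 i" "f1 i \<le> q ^ i" for i
  proof -
    have a: "0 \<le> (1 - s) ^ i" "(1 - s) ^ i \<le> 1" using s by (auto intro: power_le_one)
    show "0 \<le> f1 i" unfolding f1_def using q a by auto
    show "f1 i \<le> q ^ i"
    proof (cases "i \<ge> N")
      case True
      have "(1 / real i) * q ^ i * (1 - s) ^ i \<le> 1 * q ^ i * 1"
        using inv_le[OF True] a q by (intro mult_mono) auto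
      then show ?thesis unfolding f1_def using True by simp
    next
      case False then show ?thesis unfolding f1_def using q by simp
    qed
  qed
  have f2b: "0 \<le> f2 i" "f2 i \<le> q ^ i" for i
  proof -
    show "0 \<le> f2 i" unfolding f2_def using q by auto
    show "f2 i \<le> q ^ i"
    proof (cases "i \<ge> N")
      case True
      have "(1 / real i) * q ^ i \<le> 1 * q ^ i"
        using inv_le[OF True] q by (intro mult_right_mono) auto
      then show ?thesis unfolding f2_def using True by simp
    next
      case False then show ?thesis unfolding f2_def using q by simp
    qed
  qed
  have sf1: "summable f1" by (rule summable_comparison_test'[OF geo]) (use f1b in auto)
  have sf2: "summable f2" by (rule summable_comparison_test'[OF geo]) (use f2b in auto)
  have db: "0 \<le> f2 i - f1 i" "f2 i - f1 i \<le> q ^ i * s" for i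
  proof -
    have a: "0 \<le> (1 - s) ^ i" "(1 - s) ^ i \<le> 1" using s by (auto intro: power_le_one)
    show "0 \<le> f2 i - f1 i"
    proof (cases "i \<ge> N")
      case True
      have "(1 / real i) * q ^ i * (1 - s) ^ i \<le> (1 / real i) * q ^ i * 1"
        using a q by (intro mult_left_mono) auto
      then show ?thesis unfolding f1_def f2_def using True by simp
    next
      case False then show ?thesis unfolding f1_def f2_def by simp
    qed
    show "f2 i - f1 i \<le> q ^ i * s"
    proof (cases "i \<ge> N")
      case True
      then have ip: "real i > 0" using N1 by simp
      have "1 + real i * (- s) \<le> (1 + (- s)) ^ i" by (rule Bernoulli_inequality) (use s in auto)
      then have b: "1 - (1 - s) ^ i \<le> real i * s" by simp
      have "f2 i - f1 i = (1 / real i) * q ^ i * (1 - (1 - s) ^ i)"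
        unfolding f1_def f2_def using True by (simp add: algebra_simps)
      also have "\<dots> \<le> (1 / real i) * q ^ i * (real i * s)"
        using b q ip by (intro mult_left_mono) auto
      also have "\<dots> = q ^ i * s" using ip by simp
      finally show ?thesis .
    next
      case False then show ?thesis unfolding f1_def f2_def using q s by simp
    qed
  qed
  have sd: "summable (\<lambda>i. f2 i - f1 i)" using sf1 sf2 by (rule summable_diff[rotated])
  have diff: "suminf f2 - suminf f1 = (\<Sum>i. f2 i - f1 i)" using suminf_diff[OF sf2 sf1] by simp
  have geos: "summable (\<lambda>i. q ^ i * s)" using geo by (rule summable_mult2)
  have "(\<Sum>i. f2 i - f1 i) \<le> (\<Sum>i. q ^ i * s)" by (rule suminf_le) (use db sd geos in auto)
  also have "\<dots> = (\<Sum>i. q ^ i) * s" using geo by (rule suminf_mult2[symmetric])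
  also have "\<dots> = r * s" using q suminf_geometric[of q] unfolding q_def by simp
  finally have up: "suminf f2 - suminf f1 \<le> r * s" using diff by simp
  have lo: "0 \<le> suminf f2 - suminf f1" using diff suminf_nonneg[OF sd] db by simp
  show "0 \<le> gamma1 r K N" unfolding g1 using suminf_nonneg[OF sf1] f1b by simp
  show "0 \<le> gamma2 r K N - gamma1 r K N" unfolding g1 g2 using lo
    by (simp add: right_diff_distrib[symmetric])
  have "gamma2 r K N - gamma1 r K N = real N * (suminf f2 - suminf f1)" unfolding g1 g2
    by (simp add: right_diff_distrib)
  also have "\<dots> \<le> real N * (r * s)" using up by (intro mult_left_mono) auto
  also have "\<dots> = real N * r / (real K - 1)" unfolding s_def by simp
  finally show "gamma2 r K N - gamma1 r K N \<le> real N * r / (real K - 1)" .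
qed

lemma part1:
  assumes r: "r > 1" and N1: "N \<ge> 1"
  shows "((\<lambda>K. UB r K N - LB r K N) \<longlongrightarrow> 0) sequentially"
proof -
  define D where "D = (r ^ N - (r - 1) ^ N) / r ^ (N - 1)"
  have "(r - 1) ^ N < r ^ N" using r N1 by (intro power_strict_mono) auto
  then have Dp: "D > 0" unfolding D_def using r by simp
  define C where "C = 2 * real N * r / D"
  have bnd: "0 \<le> UB r K N - LB r K N \<and> UB r K N - LB r K N \<le> C * inverse (real K)" if K3: "K \<ge> 3" for K
  proof -
    define g1 where "g1 = gamma1 r K N"
    define g2 where "g2 = gamma2 r K N"
    have g: "0 \<le> g1" "0 \<le> g2 - g1" "g2 - g1 \<le> real N * r / (real K - 1)"
      using gamma_bounds[OF r N1 K3] unfolding g1_def g2_def by auto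
    have p1: "D + g1 > 0" "D + g2 > 0" using g Dp by auto
    have eq: "UB r K N - LB r K N = D * (g2 - g1) / ((D + g1) * (D + g2))"
      unfolding UB_def LB_def D_def[symmetric] g1_def[symmetric] g2_def[symmetric]
      using p1 by (simp add: divide_simps) (simp add: algebra_simps)
    have lo: "0 \<le> UB r K N - LB r K N" unfolding eq using Dp g p1 by simp
    have "D * (g2 - g1) / ((D + g1) * (D + g2)) \<le> D * (g2 - g1) / (D * D)"
      using Dp g p1 by (intro divide_left_mono mult_mono) auto
    also have "\<dots> = (g2 - g1) / D" using Dp by simp
    also have "\<dots> \<le> (real N * r / (real K - 1)) / D" using g Dp by (intro divide_right_mono) auto
    also have "\<dots> \<le> C * inverse (real K)"
    proof -
      have Kp: "real K - 1 > 0" using K3 by simp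
      have "1 / (real K - 1) \<le> 2 / real K" using K3 by (simp add: divide_simps)
      then have "real N * r * (1 / (real K - 1)) \<le> real N * r * (2 / real K)"
        using r by (intro mult_left_mono) auto
      then have "real N * r / (real K - 1) \<le> real N * r * (2 / real K)" by simp
      then have "(real N * r / (real K - 1)) / D \<le> (real N * r * (2 / real K)) / D"
        using Dp by (intro divide_right_mono) auto
      also have "(real N * r * (2 / real K)) / D = C * inverse (real K)"
        unfolding C_def by (simp add: divide_inverse)
      finally show ?thesis .
    qed
    finally show ?thesis using lo eq by simp
  qed
  show ?thesis
  proof (rule tendsto_sandwich[of "\<lambda>_. 0" _ _ "\<lambda>K. C * inverse (real K)"])
    show "\<forall>\<^sub>F K in sequentially. 0 \<le> UB r K N - LB r K N"
      by (rule eventually_mono[OF eventually_ge_at_top[of 3]]) (use bnd in blast)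
    show "\<forall>\<^sub>F K in sequentially. UB r K N - LB r K N \<le> C * inverse (real K)"
      by (rule eventually_mono[OF eventually_ge_at_top[of 3]]) (use bnd in blast)
    show "((\<lambda>_. 0::real) \<longlongrightarrow> 0) sequentially" by simp
    show "(\<lambda>K. C * inverse (real K)) \<longlonglongrightarrow> 0" by (rule tendsto_mult_right_zero[OF lim_inverse_n])
  qed
qed

theorem corollary3:
  shows "(\<forall>(r::real) (N::nat). r > 1 \<longrightarrow> N \<ge> 1 \<longrightarrow>
            ((\<lambda>K. UB r K N - LB r K N) \<longlongrightarrow> 0) sequentially)
       \<and> (\<forall>(r::real) (K::nat). r > 1 \<longrightarrow> K > 2 \<longrightarrow>
            ((\<lambda>N. eta r K N) \<longlongrightarrow> 0) sequentially)
       \<and> (\<forall>N::nat. N \<ge> 1 \<longrightarrow> (\<exists>f :: real \<Rightarrow> real.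
            (\<forall>r>1. ((\<lambda>K. eta r K N) \<longlongrightarrow> f r) sequentially) \<and> (f \<longlongrightarrow> 1) at_top))
       \<and> (\<forall>(r::real) (K::nat). r > 1 \<longrightarrow> K > 2 \<longrightarrow>
            (\<lambda>N. eta r K N) \<in> O(\<lambda>N. (1 - 1/r) ^ N))"
  using part1 part2 part3 part4 by blast

end
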